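(* Let $\kappa\ge\nu\ge\omega$ be cardinals with $\nu$ regular, and let $n\ge1$ and $k\ge1$ be natural numbers. If $\mathcal A$ is a $(k+1,\nu)$-almost disjoint family of finite subsets of $\kappa^{+(n-1)}$ such that $|A|>n\cdot k$ for every $A\in\mathcal A$, then $\chi_{\rm CF}(\mathcal A)\le\kappa$.
   Context: A family $\mathcal A$ is $(\mu,\nu)$-almost disjoint if $|\bigcap\mathcal B|<\mu$ for every $\mathcal B\subseteq\mathcal A$ with $|\mathcal B|=\nu$. For a family $\mathcal A$ and cardinal $\rho$, $f:\bigcup\mathcal A\to\rho$ is a conflict free coloring of $\mathcal A$ if for every $A\in\mathcal A$ there is $\zeta<\rho$ with $|A\cap f^{-1}\{\zeta\}|=1$; $\chi_{\rm CF}(\mathcal A)$ is the least such $\rho$. $\kappa^{+(n-1)}$ is the $(n-1)$-th successor of $\kappa$ ($\kappa^{+0}=\kappa$). *)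

theory Defs
  imports Main
begin

unbundle cardinal_syntax

text \<open>Cardinals are represented by sets via the library's cardinal order relations
  (card_of, ordLeq, ordIso, cardSuc, regularCard from BNF_Cardinal_Order_Relation).\<close>

definition succ_pow :: "'b set \<Rightarrow> nat \<Rightarrow> 'a set \<Rightarrow> bool" where
  "succ_pow K m X \<equiv> \<exists>S :: nat \<Rightarrow> 'a set.
      card_of (S 0) =o card_of K \<and> (\<forall>i<m. card_of (S (Suc i)) =o cardSuc (card_of (S i))) \<and> S m = X"

definition almost_disjoint :: "nat \<Rightarrow> 'b set \<Rightarrow> 'a set set \<Rightarrow> bool" where
  "almost_disjoint mu N \<A> \<equiv>
     \<forall>\<B>. \<B> \<subseteq> \<A> \<and> |\<B>| =o |N| \<longrightarrow> finite (\<Inter>\<B>) \<and> card (\<Inter>\<B>) < mu"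

definition cf_coloring :: "'a set set \<Rightarrow> 'c set \<Rightarrow> ('a \<Rightarrow> 'c) \<Rightarrow> bool" where
  "cf_coloring \<A> C f \<equiv> (\<forall>x\<in>\<Union>\<A>. f x \<in> C) \<and>
     (\<forall>A\<in>\<A>. \<exists>z\<in>C. card {x\<in>A. f x = z} = 1)"

definition chi_CF_le :: "'a set set \<Rightarrow> 'b set \<Rightarrow> bool" where
  "chi_CF_le \<A> K \<equiv> \<exists>(C::'b set) f. |C| \<le>o |K| \<and> cf_coloring \<A> C f"

end

theory Submission
  imports Defs
begin

lemma fin_lt_inf: "finite A \<Longrightarrow> infinite B \<Longrightarrow> |A| <o |B|"
  using finite_ordLess_infinite[of "|A|" "|B|"] card_of_Well_order Field_card_of by metis

lemma ksubsets_le: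
  assumes "infinite V"
  shows "|{s. s \<subseteq> V \<and> finite s \<and> card s = j}| \<le>o |V|"
proof (induction j)
  case 0
  have "{s. s \<subseteq> V \<and> finite s \<and> card s = 0} = {{}}" by auto
  then show ?case using ordLess_imp_ordLeq[OF fin_lt_inf[of "{{}}" V]] assms by simp
next
  case (Suc j)
  have "{s. s \<subseteq> V \<and> finite s \<and> card s = Suc j} \<subseteq> (\<lambda>(x,s). insert x s) ` (V \<times> {s. s \<subseteq> V \<and> finite s \<and> card s = j})"
  proof
    fix s assume "s \<in> {s. s \<subseteq> V \<and> finite s \<and> card s = Suc j}"
    then have s: "s \<subseteq> V" "card s = Suc j" by auto
    then obtain x where x: "x \<in> s" by (metis card.empty ex_in_conv nat.distinct(1))
    have "finite s" using s by (metis card.infinite nat.distinct(1))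
    then have "card (s - {x}) = j" using s x by auto
    then show "s \<in> (\<lambda>(x,s). insert x s) ` (V \<times> {s. s \<subseteq> V \<and> finite s \<and> card s = j})"
      using s x \<open>finite s\<close> by (intro image_eqI[of _ _ "(x, s - {x})"]) auto
  qed
  moreover have "|V \<times> {s. s \<subseteq> V \<and> finite s \<and> card s = j}| \<le>o |V|"
    using card_of_Sigma_ordLeq_infinite[OF assms, of V "\<lambda>_. {s. s \<subseteq> V \<and> finite s \<and> card s = j}"] Suc
      ordLeq_refl card_of_Card_order by blast
  ultimately show ?case
    by (meson card_of_mono1 card_of_image ordLeq_transitive)
qed
lemma wo_props:
  assumes "Well_order r"
  shows "wf (r - Id)" "trans r" "antisym r" "\<forall>a\<in>Field r. \<forall>b\<in>Field r. (a,b) \<in> r \<or> (b,a) \<in> r"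
    "\<forall>a\<in>Field r. (a,a) \<in> r"
  using wo_rel.WF wo_rel.TRANS wo_rel.ANTISYM wo_rel.TOTALS wo_rel.REFL assms
  unfolding wo_rel_def refl_on_def by blast+

lemma wo_finmax:
  assumes wo: "Well_order r" and "finite F" "F \<noteq> {}" "F \<subseteq> Field r"
  shows "\<exists>m\<in>F. \<forall>y\<in>F. (y,m) \<in> r"
  using assms(2-4)
proof (induction F rule: finite_ne_induct)
  case (singleton x)
  then show ?case using wo_props(5)[OF wo] by auto
next
  case (insert x F)
  then obtain m where m: "m \<in> F" "\<forall>y\<in>F. (y,m) \<in> r" by auto
  have "(x,m) \<in> r \<or> (m,x) \<in> r" using wo_props(4)[OF wo] insert m by blast
  then show ?case
  proof
    assume "(x,m) \<in> r" then show ?case using m by blast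
  next
    assume mx: "(m,x) \<in> r"
    have "\<forall>y\<in>insert x F. (y,x) \<in> r"
      using m mx wo_props(2,5)[OF wo] insert.prems unfolding trans_def by blast
    then show ?case by blast
  qed
qed

lemma wo_min:
  assumes wo: "Well_order r" and "B \<subseteq> Field r" "B \<noteq> {}"
  shows "\<exists>m\<in>B. \<forall>b\<in>B. (m,b) \<in> r"
proof -
  obtain x where x: "x \<in> B" using assms by blast
  obtain m where m: "m \<in> B" "\<And>y. (y, m) \<in> r - Id \<Longrightarrow> y \<notin> B"
    using wfE_min[OF wo_props(1)[OF wo] x] by blast
  have "\<forall>b\<in>B. (m,b) \<in> r"
  proof
    fix b assume b: "b \<in> B"
    have "(m,b) \<in> r \<or> (b,m) \<in> r" using wo_props(4)[OF wo] m(1) b assms(2) by blast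
    then show "(m,b) \<in> r" using m b wo_props(5)[OF wo] assms(2) by blast
  qed
  then show ?thesis using m(1) by blast
qed

lemma chain_fin:
  assumes "finite s" "s \<subseteq> (\<Union>j. G j)" "\<And>j. G j \<subseteq> G (Suc j)"
  shows "\<exists>j. s \<subseteq> G (j::nat)"
  using assms(1,2)
proof (induction s rule: finite_induct)
  case empty then show ?case by blast
next
  case (insert x s)
  then obtain j1 j2 where "x \<in> G j1" "s \<subseteq> G j2" by blast
  moreover have "G j1 \<subseteq> G (max j1 j2)" "G j2 \<subseteq> G (max j1 j2)"
    using lift_Suc_mono_le[of G, OF assms(3)] by auto
  ultimately show ?case by blast
qed

locale cfl =
  fixes AA :: "'a set set" and N :: "'c set" and K :: "'b set" and k :: nat
  assumes infN: "infinite N" and NK: "|N| \<le>o |K|" and reg: "regularCard |N|"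
    and finA: "\<forall>A\<in>AA. finite A" and ad: "almost_disjoint (k+1) N AA"
begin

lemma infK: "infinite K" using card_of_ordLeq_infinite[OF NK infN] .

lemma stN: "stable |N|"
  using regularCard_stable[OF card_of_Card_order _ reg] infN by (simp add: Field_card_of)

definition W :: "'a set \<Rightarrow> 'a set" where "W s = \<Union>{A\<in>AA. s \<subseteq> A}"

lemma few:
  assumes s: "finite s" "card s = k+1"
  shows "|{A\<in>AA. s \<subseteq> A}| <o |N|"
proof (rule ccontr)
  let ?F = "{A\<in>AA. s \<subseteq> A}"
  assume "\<not> |?F| <o |N|"
  then have "|N| \<le>o |?F|" using not_ordLess_iff_ordLeq[OF card_of_Well_order card_of_Well_order] by blast
  then obtain f where f: "inj_on f N" "f ` N \<subseteq> ?F" using card_of_ordLeq[of N ?F] by blast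
  have "|f ` N| =o |N|"
    using f(1) card_of_ordIso[of N "f ` N"] ordIso_symmetric inj_on_imp_bij_betw by blast
  moreover have "f ` N \<subseteq> AA" using f(2) by blast
  ultimately have "finite (\<Inter>(f ` N)) \<and> card (\<Inter>(f ` N)) < k+1"
    using ad unfolding almost_disjoint_def by blast
  moreover have "s \<subseteq> \<Inter>(f ` N)" using f(2) by blast
  ultimately have "card s \<le> card (\<Inter>(f ` N))" by (intro card_mono) auto
  then show False using s \<open>finite (\<Inter>(f ` N)) \<and> card (\<Inter>(f ` N)) < k+1\<close> by linarith
qed

lemma Wsmall:
  assumes s: "finite s" "card s = k+1"
  shows "|W s| <o |N|"
proof -
  have "|\<Union>A\<in>{A\<in>AA. s \<subseteq> A}. A| <o |N|"
  proof (rule stable_UNION[OF stN few[OF s]])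
    fix A assume "A \<in> {A\<in>AA. s \<subseteq> A}"
    then have "finite A" using finA by blast
    then show "|A| <o |N|" using fin_lt_inf infN by blast
  qed
  then show ?thesis unfolding W_def by simp
qed

definition Z :: "'a set \<Rightarrow> 'a set" where "Z U = \<Union>{A\<in>AA. k+1 \<le> card (A \<inter> U)}"

definition SS :: "'a set \<Rightarrow> 'a set set" where "SS U = {s. s \<subseteq> U \<and> finite s \<and> card s = k+1}"

lemma Z_eq: "Z U = (\<Union>s\<in>SS U. W s)"
proof
  show "Z U \<subseteq> (\<Union>s\<in>SS U. W s)"
  proof
    fix x assume "x \<in> Z U"
    then obtain A where A: "A \<in> AA" "k+1 \<le> card (A \<inter> U)" "x \<in> A" unfolding Z_def by blast
    then obtain s where "s \<subseteq> A \<inter> U" "card s = k+1" "finite s"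
      using obtain_subset_with_card_n by metis
    then show "x \<in> (\<Union>s\<in>SS U. W s)" unfolding SS_def W_def using A by blast
  qed
next
  show "(\<Union>s\<in>SS U. W s) \<subseteq> Z U"
  proof
    fix x assume "x \<in> (\<Union>s\<in>SS U. W s)"
    then obtain s A where s: "s \<subseteq> U" "finite s" "card s = k+1" and A: "A \<in> AA" "s \<subseteq> A" "x \<in> A"
      unfolding SS_def W_def by blast
    have "card s \<le> card (A \<inter> U)" using s A finA by (intro card_mono) auto
    then show "x \<in> Z U" unfolding Z_def using s A by (intro UnionI[of A]) auto
  qed
qed

lemma SS_lt: assumes "|U| <o |K|" shows "|SS U| <o |K|"
proof (cases "finite U")
  case True
  then have "finite (SS U)" unfolding SS_def by (rule rev_finite_subset[OF finite_Pow_iff[THEN iffD2]]) auto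
  then show ?thesis using fin_lt_inf infK by blast
next
  case False
  then show ?thesis using ksubsets_le[OF False, of "k+1"] assms unfolding SS_def
    using ordLeq_ordLess_trans by blast
qed

lemma SS_le: assumes "infinite S" "|U| \<le>o |S|" shows "|SS U| \<le>o |S|"
proof (cases "finite U")
  case True
  then have "finite (SS U)" unfolding SS_def by (rule rev_finite_subset[OF finite_Pow_iff[THEN iffD2]]) auto
  then show ?thesis using fin_lt_inf assms ordLess_imp_ordLeq by blast
next
  case False
  then show ?thesis using ksubsets_le[OF False, of "k+1"] assms unfolding SS_def
    using ordLeq_transitive by blast
qed

lemma KCL: assumes "|U| <o |K|" shows "|Z U| <o |K|"
proof -
  have Ws: "\<forall>s\<in>SS U. |W s| <o |N|" using Wsmall unfolding SS_def by blast
  have I: "|SS U| <o |K|" using SS_lt[OF assms] .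
  show ?thesis
  proof (cases "|N| =o |K|")
    case True
    have "stable |K|" using stable_ordIso1[OF stN] True ordIso_symmetric by blast
    moreover have "\<forall>s\<in>SS U. |W s| <o |K|" using Ws True ordLess_ordIso_trans by blast
    ultimately show ?thesis unfolding Z_eq using I card_of_UNION_ordLess_infinite by blast
  next
    case False
    then have NK': "|N| <o |K|" using NK ordLeq_iff_ordLess_or_ordIso by blast
    have "|\<Union>s\<in>SS U. W s| <o |K|"
    proof (cases "|SS U| \<le>o |N|")
      case True
      have "|\<Union>s\<in>SS U. W s| \<le>o |N|"
        using card_of_UNION_ordLeq_infinite[OF infN True] Ws ordLess_imp_ordLeq by blast
      then show ?thesis using NK' ordLeq_ordLess_trans by blast
    next
      case False
      then have NS: "|N| \<le>o |SS U|" using ordLeq_total[OF card_of_Well_order card_of_Well_order] by blast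
      then have "infinite (SS U)" using card_of_ordLeq_infinite infN by blast
      have "|\<Union>s\<in>SS U. W s| \<le>o |SS U|"
        using card_of_UNION_ordLeq_infinite[OF \<open>infinite (SS U)\<close> ordLeq_refl[OF card_of_Card_order]] Ws
          ordLess_imp_ordLeq NS ordLeq_transitive by blast
      then show ?thesis using I ordLeq_ordLess_trans by blast
    qed
    then show ?thesis unfolding Z_eq .
  qed
qed

lemma Zbig: assumes "infinite S" "|N| \<le>o |S|" "|U| \<le>o |S|" shows "|Z U| \<le>o |S|"
  unfolding Z_eq
  using card_of_UNION_ordLeq_infinite[OF assms(1) SS_le[OF assms(1,3)]] Wsmall assms(2)
    ordLess_imp_ordLeq ordLeq_transitive unfolding SS_def by blast


definition Vset :: "'a set \<Rightarrow> nat \<Rightarrow> ('a set \<Rightarrow> 'a) \<Rightarrow> 'a \<Rightarrow> 'a set" where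
  "Vset Y t mx x = \<Union>{A \<inter> Y | A. A \<in> AA \<and> t < card (A \<inter> Y) \<and> mx A = x}"

definition good :: "'a set \<Rightarrow> nat \<Rightarrow> 'a rel \<Rightarrow> ('a set \<Rightarrow> 'a) \<Rightarrow> bool" where
  "good Y t R mx \<longleftrightarrow> wf R \<and>
     (\<forall>A\<in>AA. t < card (A \<inter> Y) \<longrightarrow> mx A \<in> A \<inter> Y \<and> (\<forall>y\<in>A \<inter> Y. y \<noteq> mx A \<longrightarrow> (y, mx A) \<in> R)) \<and>
     (\<forall>x. |Vset Y t mx x| <o |K| )"

lemma base:
  assumes YK: "|Y| \<le>o |K|"
  shows "\<exists>R mx. good Y k R mx"
proof -
  let ?r = "|Y|"
  have wo: "Well_order ?r" by (rule card_of_Well_order)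
  have F: "Field ?r = Y" by (rule Field_card_of)
  define mx where "mx A = (SOME m. m \<in> A \<inter> Y \<and> (\<forall>y\<in>A \<inter> Y. (y,m) \<in> ?r))" for A
  have mxp: "mx A \<in> A \<inter> Y \<and> (\<forall>y\<in>A \<inter> Y. (y, mx A) \<in> ?r)" if "A \<in> AA" "k < card (A \<inter> Y)" for A
  proof -
    have "finite (A \<inter> Y)" "A \<inter> Y \<noteq> {}" using that finA by auto
    then have "\<exists>m\<in>A \<inter> Y. \<forall>y\<in>A \<inter> Y. (y,m) \<in> ?r" using wo_finmax[OF wo] F by blast
    then show ?thesis unfolding mx_def by (rule someI_ex[of "\<lambda>m. m \<in> A \<inter> Y \<and> (\<forall>y\<in>A \<inter> Y. (y,m) \<in> ?r)", OF bexE]) blast+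
  qed
  have V: "|Vset Y k mx x| <o |K|" for x
  proof (cases "x \<in> Y")
    case False
    then have "Vset Y k mx x = {}" unfolding Vset_def using mxp by blast
    then show ?thesis using fin_lt_inf[of "{}" K] infK by simp
  next
    case True
    let ?U = "underS ?r x \<union> {x}"
    have "|underS ?r x| <o |Y|" using card_of_underS[OF card_of_Card_order, of x Y] True F by simp
    then have "|underS ?r x| <o |K|" using YK ordLess_ordLeq_trans by blast
    then have U: "|?U| <o |K|" using card_of_Un_ordLess_infinite[OF infK] fin_lt_inf[of "{x}" K] infK by blast
    have "Vset Y k mx x \<subseteq> Z ?U"
    proof
      fix z assume "z \<in> Vset Y k mx x"
      then obtain A where A: "A \<in> AA" "k < card (A \<inter> Y)" "mx A = x" "z \<in> A \<inter> Y"
        unfolding Vset_def by blast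
      have sub: "A \<inter> Y \<subseteq> A \<inter> ?U" using mxp[OF A(1,2)] A(3) unfolding underS_def by auto
      have "card (A \<inter> Y) \<le> card (A \<inter> ?U)" using finA A(1) by (intro card_mono[OF _ sub]) auto
      then show "z \<in> Z ?U" unfolding Z_def using A by (intro UnionI[of A]) auto
    qed
    then show ?thesis using KCL[OF U] card_of_mono1 ordLeq_ordLess_trans by blast
  qed
  have "good Y k (?r - Id) mx" unfolding good_def
    using wo_props(1)[OF wo] mxp V by blast
  then show ?thesis by blast
qed

end

locale stp = cfl AA N K k for AA :: "'a set set" and N :: "'c set" and K :: "'b set" and k +
  fixes Y :: "'a set" and S :: "'d set" and t :: nat
  assumes IH: "\<forall>Y'::'a set. |Y'| \<le>o |S| \<longrightarrow> (\<exists>R mx. good Y' t R mx)"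
    and infS: "infinite S" and NS: "|N| \<le>o |S|" and YS: "|Y| \<le>o cardSuc |S|" and kt: "k \<le> t"
begin

definition gg :: "'a set \<Rightarrow> 'a set" where "gg V = V \<union> (Y \<inter> Z V)"
definition GG :: "'a set \<Rightarrow> nat \<Rightarrow> 'a set" where "GG U j = (gg ^^ j) U"
definition Cl :: "'a set \<Rightarrow> 'a set" where "Cl U = (\<Union>j. GG U j)"

lemma Z_mono: "V \<subseteq> V' \<Longrightarrow> Z V \<subseteq> Z V'"
proof
  fix x assume "V \<subseteq> V'" "x \<in> Z V"
  then obtain A where A: "A \<in> AA" "k+1 \<le> card (A \<inter> V)" "x \<in> A" unfolding Z_def by blast
  have "card (A \<inter> V) \<le> card (A \<inter> V')" using finA A(1) \<open>V \<subseteq> V'\<close> by (intro card_mono) auto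
  then show "x \<in> Z V'" unfolding Z_def using A by (intro UnionI[of A]) auto
qed

lemma GG_Suc: "GG U (Suc j) = gg (GG U j)" unfolding GG_def by simp
lemma GG_0: "GG U 0 = U" unfolding GG_def by simp
lemma GG_inc: "GG U j \<subseteq> GG U (Suc j)" unfolding GG_Suc gg_def by blast
lemma GG_sub: "U \<subseteq> Y \<Longrightarrow> GG U j \<subseteq> Y"
proof (induction j)
  case 0 then show ?case by (simp add: GG_0)
next
  case (Suc j) then show ?case by (simp add: GG_Suc gg_def)
qed

lemma GG_mono: "U \<subseteq> U' \<Longrightarrow> GG U j \<subseteq> GG U' j"
proof (induction j)
  case 0 then show ?case by (simp add: GG_0)
next
  case (Suc j)
  then have "GG U j \<subseteq> GG U' j" by simp
  then have "Z (GG U j) \<subseteq> Z (GG U' j)" by (rule Z_mono)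
  then show ?case unfolding GG_Suc gg_def using \<open>GG U j \<subseteq> GG U' j\<close> by blast
qed

lemma Cl_sub: assumes "U \<subseteq> Y" shows "Cl U \<subseteq> Y"
proof -
  have "\<forall>j. GG U j \<subseteq> Y" using GG_sub[OF assms] by blast
  then show ?thesis unfolding Cl_def by blast
qed

lemma Cl_ext: "U \<subseteq> Cl U" unfolding Cl_def using GG_0[of U] by blast

lemma Cl_mono: assumes "U \<subseteq> U'" shows "Cl U \<subseteq> Cl U'"
proof -
  have "\<forall>j. GG U j \<subseteq> GG U' j" using GG_mono[OF assms] by blast
  then show ?thesis unfolding Cl_def by blast
qed

lemma Cl_closed:
  assumes A: "A \<in> AA" and c: "k+1 \<le> card (A \<inter> Cl U)"
  shows "A \<inter> Y \<subseteq> Cl U"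
proof -
  obtain s where s: "s \<subseteq> A \<inter> Cl U" "card s = k+1" "finite s"
    using obtain_subset_with_card_n[OF c] by metis
  then obtain j where j: "s \<subseteq> GG U j" using chain_fin[of s "GG U", OF s(3)] GG_inc unfolding Cl_def by blast
  have "card s \<le> card (A \<inter> GG U j)" using s j finA A by (intro card_mono) auto
  then have "A \<subseteq> Z (GG U j)" unfolding Z_def using A s by (intro Union_upper) auto
  then have "A \<inter> Y \<subseteq> GG U (Suc j)" unfolding GG_Suc gg_def by blast
  then show ?thesis unfolding Cl_def by blast
qed

lemma Un_le: assumes "|A| \<le>o |S|" "|B| \<le>o |S|" shows "|A \<union> B| \<le>o |S|"
  using card_of_Un_ordLeq_infinite_Field[of "|S|" A B] assms infS card_of_Card_order[of S]
  unfolding Field_card_of by blast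

lemma Cl_size:
  assumes "|U| \<le>o |S|" shows "|Cl U| \<le>o |S|"
proof -
  have "|GG U j| \<le>o |S|" for j
  proof (induction j)
    case 0 then show ?case using assms by (simp add: GG_0)
  next
    case (Suc j)
    have "|Z (GG U j)| \<le>o |S|" using Zbig[OF infS NS Suc] .
    then have "|Y \<inter> Z (GG U j)| \<le>o |S|" using card_of_mono1[of "Y \<inter> Z (GG U j)"] ordLeq_transitive by blast
    then show ?case unfolding GG_Suc gg_def using Un_le Suc by blast
  qed
  moreover have "|UNIV::nat set| \<le>o |S|" using infS infinite_iff_card_of_nat by blast
  ultimately show ?thesis unfolding Cl_def using card_of_UNION_ordLeq_infinite[OF infS] by blast
qed


lemma woY: "Well_order |Y|" by (rule card_of_Well_order)
lemma FY: "Field (card_of Y) = Y" by (rule Field_card_of)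

lemma under_sub: "under (card_of Y) a \<subseteq> Y"
proof
  fix b assume "b \<in> under (card_of Y) a"
  then have "(b,a) \<in> |Y|" by (simp add: under_def)
  then have "b \<in> Field (card_of Y)" by (rule FieldI1)
  then show "b \<in> Y" using FY by simp
qed

lemma under_size: assumes a: "a \<in> Y" shows "|under (card_of Y) a| \<le>o |S|"
proof -
  have "|underS (card_of Y) a| <o |Y|" using card_of_underS[OF card_of_Card_order, of a Y] a FY by simp
  then have "|underS (card_of Y) a| <o cardSuc |S|" using YS by (rule ordLess_ordLeq_trans)
  then have 1: "|underS (card_of Y) a| \<le>o |S|"
    using cardSuc_ordLeq_ordLess[OF card_of_Card_order card_of_Card_order] by blast
  have 2: "|{a}| \<le>o |S|" using ordLess_imp_ordLeq[OF fin_lt_inf[of "{a}" S]] infS by simp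
  have sub: "under (card_of Y) a \<subseteq> underS (card_of Y) a \<union> {a}" unfolding under_def underS_def by blast
  show ?thesis using ordLeq_transitive[OF card_of_mono1[OF sub] Un_le[OF 1 2]] .
qed

definition XX :: "'a \<Rightarrow> 'a set" where "XX a = Cl (under (card_of Y) a)"

lemma XX_sub: "XX a \<subseteq> Y" unfolding XX_def by (rule Cl_sub[OF under_sub])
lemma XX_size: "a \<in> Y \<Longrightarrow> |XX a| \<le>o |S|" unfolding XX_def by (rule Cl_size[OF under_size])
lemma XX_mono: assumes "(a,b) \<in> |Y|" shows "XX a \<subseteq> XX b"
proof -
  have "under (card_of Y) a \<subseteq> under (card_of Y) b"
  proof
    fix c assume "c \<in> under (card_of Y) a"
    then have "(c,a) \<in> |Y|" by (simp add: under_def)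
    then show "c \<in> under (card_of Y) b" using assms wo_props(2)[OF woY] unfolding under_def trans_def by blast
  qed
  then show ?thesis unfolding XX_def by (rule Cl_mono)
qed
lemma XX_self: assumes y: "y \<in> Y" shows "y \<in> XX y"
proof -
  have "(y,y) \<in> |Y|" using wo_props(5)[OF woY] FY y by auto
  then have "y \<in> under (card_of Y) y" by (simp add: under_def)
  then show ?thesis using Cl_ext unfolding XX_def by blast
qed
lemma XX_closed: "A \<in> AA \<Longrightarrow> k+1 \<le> card (A \<inter> XX a) \<Longrightarrow> A \<inter> Y \<subseteq> XX a"
  unfolding XX_def by (rule Cl_closed)

definition rank :: "'a \<Rightarrow> 'a" where
  "rank y = (SOME a. a \<in> Y \<and> y \<in> XX a \<and> (\<forall>b\<in>Y. y \<in> XX b \<longrightarrow> (a,b) \<in> |Y| ))"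

lemma rank_props:
  assumes y: "y \<in> Y"
  shows "rank y \<in> Y" "y \<in> XX (rank y)" "\<forall>b\<in>Y. y \<in> XX b \<longrightarrow> (rank y, b) \<in> |Y|"
proof -
  have "\<exists>m\<in>{a\<in>Y. y \<in> XX a}. \<forall>b\<in>{a\<in>Y. y \<in> XX a}. (m,b) \<in> |Y|"
    using wo_min[OF woY, of "{a\<in>Y. y \<in> XX a}"] FY XX_self[OF y] y by blast
  then have "\<exists>a. a \<in> Y \<and> y \<in> XX a \<and> (\<forall>b\<in>Y. y \<in> XX b \<longrightarrow> (a,b) \<in> |Y| )" by blast
  then have "rank y \<in> Y \<and> y \<in> XX (rank y) \<and> (\<forall>b\<in>Y. y \<in> XX b \<longrightarrow> (rank y, b) \<in> |Y| )"
    unfolding rank_def by (rule someI_ex)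
  then show "rank y \<in> Y" "y \<in> XX (rank y)" "\<forall>b\<in>Y. y \<in> XX b \<longrightarrow> (rank y, b) \<in> |Y|" by auto
qed

definition LL :: "'a \<Rightarrow> 'a set" where "LL a = {y\<in>Y. rank y = a}"

lemma LL_size: "|LL a| \<le>o |S|"
proof (cases "a \<in> Y")
  case True
  have "LL a \<subseteq> XX a" unfolding LL_def using rank_props by blast
  then show ?thesis using XX_size[OF True] card_of_mono1 ordLeq_transitive by blast
next
  case False
  then have "LL a = {}" unfolding LL_def using rank_props by blast
  then show ?thesis using card_of_empty by simp
qed

definition am :: "'a set \<Rightarrow> 'a" where
  "am A = (SOME a. a \<in> rank ` (A \<inter> Y) \<and> (\<forall>b\<in>rank ` (A \<inter> Y). (b,a) \<in> |Y| ))"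

lemma am_props:
  assumes "A \<in> AA" "A \<inter> Y \<noteq> {}"
  shows "am A \<in> rank ` (A \<inter> Y)" "\<forall>b\<in>rank ` (A \<inter> Y). (b, am A) \<in> |Y|"
proof -
  have "finite (rank ` (A \<inter> Y))" using assms finA by blast
  moreover have "rank ` (A \<inter> Y) \<subseteq> Field (card_of Y)" using rank_props(1) FY by blast
  ultimately have "\<exists>a\<in>rank ` (A \<inter> Y). \<forall>b\<in>rank ` (A \<inter> Y). (b,a) \<in> |Y|"
    using wo_finmax[OF woY] assms(2) by blast
  then have "\<exists>a. a \<in> rank ` (A \<inter> Y) \<and> (\<forall>b\<in>rank ` (A \<inter> Y). (b,a) \<in> |Y| )" by blast
  then have "am A \<in> rank ` (A \<inter> Y) \<and> (\<forall>b\<in>rank ` (A \<inter> Y). (b,am A) \<in> |Y| )"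
    unfolding am_def by (rule someI_ex)
  then show "am A \<in> rank ` (A \<inter> Y)" "\<forall>b\<in>rank ` (A \<inter> Y). (b, am A) \<in> |Y|" by auto
qed

lemma KEY:
  assumes A: "A \<in> AA" and c: "t + k < card (A \<inter> Y)"
  shows "t < card (A \<inter> LL (am A))"
proof -
  let ?a = "am A"
  have ne: "A \<inter> Y \<noteq> {}" using c by auto
  note am = am_props[OF A ne]
  let ?P = "{y\<in>A \<inter> Y. rank y \<noteq> ?a}"
  have finAY: "finite (A \<inter> Y)" using A finA by blast
  have Pk: "card ?P \<le> k"
  proof (rule ccontr)
    assume "\<not> card ?P \<le> k"
    then have cP: "k+1 \<le> card ?P" by simp
    have finP: "finite ?P" using finAY by (rule rev_finite_subset) blast
    have "card ?P \<noteq> 0" using cP by linarith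
    then have neP: "?P \<noteq> {}" by (metis card.empty)
    have f1: "finite (rank ` ?P)" using finP by (rule finite_imageI)
    have f2: "rank ` ?P \<noteq> {}" using neP by blast
    have f3: "rank ` ?P \<subseteq> Field (card_of Y)" using rank_props(1) FY by blast
    obtain b where b: "b \<in> rank ` ?P" "\<forall>c\<in>rank ` ?P. (c,b) \<in> |Y|"
      using wo_finmax[OF woY f1 f2 f3] by blast
    have bY: "b \<in> Y" using b(1) rank_props(1) by blast
    have bna: "b \<noteq> ?a" using b(1) by auto
    have ba: "(b, ?a) \<in> |Y|" using b(1) am(2) by blast
    have "?P \<subseteq> XX b"
    proof
      fix y assume y: "y \<in> ?P"
      then have "(rank y, b) \<in> |Y|" using b(2) by blast
      then have "XX (rank y) \<subseteq> XX b" by (rule XX_mono)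
      then show "y \<in> XX b" using rank_props(2)[of y] y by blast
    qed
    then have "?P \<subseteq> A \<inter> XX b" by blast
    then have "card ?P \<le> card (A \<inter> XX b)" using A finA by (intro card_mono) auto
    then have "k+1 \<le> card (A \<inter> XX b)" using cP by linarith
    then have AY: "A \<inter> Y \<subseteq> XX b" by (rule XX_closed[OF A])
    obtain z where z: "?a = rank z" "z \<in> A \<inter> Y" using am(1) by (rule imageE)
    have "z \<in> XX b" using AY z(2) by blast
    then have "(rank z, b) \<in> |Y|" using rank_props(3)[of z] z(2) bY by blast
    then have "(?a, b) \<in> |Y|" using z(1) by simp
    then show False using ba bna wo_props(3)[OF woY] unfolding antisym_def by blast
  qed
  have e1: "A \<inter> Y = (A \<inter> LL ?a) \<union> ?P" unfolding LL_def by blast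
  have dis: "(A \<inter> LL ?a) \<inter> ?P = {}" unfolding LL_def by blast
  have f1: "finite (A \<inter> LL ?a)" using finAY unfolding LL_def by (rule rev_finite_subset) blast
  have f2: "finite ?P" using finAY by (rule rev_finite_subset) blast
  have e2: "card ((A \<inter> LL ?a) \<union> ?P) = card (A \<inter> LL ?a) + card ?P"
    by (rule card_Un_disjoint[OF f1 f2 dis])
  have "card (A \<inter> Y) = card (A \<inter> LL ?a) + card ?P"
    using arg_cong[OF e1, of card] e2 by (rule trans)
  then show ?thesis using c Pk by linarith
qed


lemma step_main: "\<exists>R mx. good Y (t+k) R mx"
proof -
  have "\<forall>a. \<exists>R mx. good (LL a) t R mx" using IH LL_size by blast
  then obtain RR MX where RM: "\<forall>a. good (LL a) t (RR a) (MX a)" by metis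
  define mx where "mx A = MX (am A) A" for A
  define R where "R = {(y,x). y\<in>Y \<and> x\<in>Y \<and> ((rank y, rank x) \<in> |Y| - Id \<or> (rank y = rank x \<and> (y,x) \<in> RR (rank x)))}"
  have wfR: "wf R"
  proof -
    let ?R1 = "inv_image (card_of Y - Id) rank"
    let ?R2 = "inv_image (same_fst (\<lambda>_. True) RR) (\<lambda>y. (rank y, y))"
    have "wf ?R1" using wo_props(1)[OF woY] by (rule wf_inv_image)
    moreover have "wf ?R2"
    proof (rule wf_inv_image[OF wf_same_fst])
      fix a show "wf (RR a)" using RM unfolding good_def by blast
    qed
    moreover have "?R1 O ?R2 \<subseteq> ?R1" by (auto simp: same_fst_def)
    ultimately have "wf (?R1 \<union> ?R2)" by (rule wf_union_compatible)
    moreover have "R \<subseteq> ?R1 \<union> ?R2" unfolding R_def by (auto simp: same_fst_def)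
    ultimately show ?thesis by (rule wf_subset)
  qed
  have P: "mx A \<in> A \<inter> Y \<and> rank (mx A) = am A \<and> t < card (A \<inter> LL (am A)) \<and>
      (\<forall>y\<in>A \<inter> Y. y \<noteq> mx A \<longrightarrow> (y, mx A) \<in> R)"
    if A: "A \<in> AA" "t+k < card (A \<inter> Y)" for A
  proof -
    let ?a = "am A"
    have c: "t < card (A \<inter> LL ?a)" by (rule KEY[OF A])
    have g: "MX ?a A \<in> A \<inter> LL ?a \<and> (\<forall>y\<in>A \<inter> LL ?a. y \<noteq> MX ?a A \<longrightarrow> (y, MX ?a A) \<in> RR ?a)"
      using RM c A(1) unfolding good_def by blast
    have ne: "A \<inter> Y \<noteq> {}" using A(2) by auto
    note am = am_props[OF A(1) ne]
    have m1: "mx A \<in> A \<inter> Y" "rank (mx A) = ?a" using g unfolding mx_def LL_def by auto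
    have "\<forall>y\<in>A \<inter> Y. y \<noteq> mx A \<longrightarrow> (y, mx A) \<in> R"
    proof (intro ballI impI)
      fix y assume y: "y \<in> A \<inter> Y" "y \<noteq> mx A"
      show "(y, mx A) \<in> R"
      proof (cases "rank y = ?a")
        case True
        then have "y \<in> A \<inter> LL ?a" using y unfolding LL_def by blast
        then have "(y, mx A) \<in> RR ?a" using g y(2) unfolding mx_def by blast
        then show ?thesis unfolding R_def using y m1 True by auto
      next
        case False
        have "(rank y, ?a) \<in> |Y|" using am(2) y(1) by blast
        then show ?thesis unfolding R_def using y m1 False by auto
      qed
    qed
    then show ?thesis using m1 c by blast
  qed
  have V: "|Vset Y (t+k) mx x| <o |K|" for x
  proof -
    let ?U = "Vset (LL (rank x)) t (MX (rank x)) x"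
    have U: "|?U| <o |K|" using RM unfolding good_def by blast
    have "Vset Y (t+k) mx x \<subseteq> Z ?U"
    proof
      fix z assume "z \<in> Vset Y (t+k) mx x"
      then obtain A where A: "A \<in> AA" "t+k < card (A \<inter> Y)" "mx A = x" "z \<in> A \<inter> Y"
        unfolding Vset_def by blast
      note PA = P[OF A(1,2)]
      have ra: "rank x = am A" using PA A(3) by blast
      have "A \<inter> LL (rank x) \<subseteq> ?U"
      proof -
        have "MX (rank x) A = x" using A(3) ra unfolding mx_def by simp
        moreover have "t < card (A \<inter> LL (rank x))" using PA ra by simp
        ultimately show ?thesis unfolding Vset_def using A(1) by blast
      qed
      then have "card (A \<inter> LL (rank x)) \<le> card (A \<inter> ?U)" using finA A(1) by (intro card_mono) auto
      moreover have "t < card (A \<inter> LL (rank x))" using PA ra by simp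
      ultimately have "k+1 \<le> card (A \<inter> ?U)" using kt by linarith
      then show "z \<in> Z ?U" unfolding Z_def using A(1,4) by (intro UnionI[of A]) auto
    qed
    then show ?thesis using KCL[OF U] card_of_mono1 ordLeq_ordLess_trans by blast
  qed
  have "good Y (t+k) R mx" unfolding good_def using wfR P V by blast
  then show ?thesis by blast
qed

end


context cfl
begin

lemma allQ:
  fixes S :: "nat \<Rightarrow> 'a set"
  assumes S0: "|S 0| =o |K|" and SS: "\<forall>i<m. |S (Suc i)| =o cardSuc |S i|"
  shows "i \<le> m \<longrightarrow> (\<forall>Y'::'a set. |Y'| \<le>o |S i| \<longrightarrow> (\<exists>R mx. good Y' ((i+1)*k) R mx))
      \<and> infinite (S i) \<and> |N| \<le>o |S i|"
proof (induction i)
  case 0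
  have "|K| \<le>o |S 0|" using S0 ordIso_symmetric ordIso_iff_ordLeq by blast
  then have inf0: "infinite (S 0)" using card_of_ordLeq_infinite infK by blast
  have N0: "|N| \<le>o |S 0|" using NK \<open>|K| \<le>o |S 0|\<close> ordLeq_transitive by blast
  have "\<exists>R mx. good Y' ((0+1)*k) R mx" if "|Y'| \<le>o |S 0|" for Y' :: "'a set"
  proof -
    have "|Y'| \<le>o |K|" using that S0 by (rule ordLeq_ordIso_trans)
    then show ?thesis using base by simp
  qed
  then show ?case using inf0 N0 by blast
next
  case (Suc i)
  show ?case
  proof
    assume le: "Suc i \<le> m"
    then have IHi: "(\<forall>Y'::'a set. |Y'| \<le>o |S i| \<longrightarrow> (\<exists>R mx. good Y' ((i+1)*k) R mx))"
      "infinite (S i)" "|N| \<le>o |S i|" using Suc by auto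
    have iso: "|S (Suc i)| =o cardSuc |S i|" using SS le by simp
    have "|S i| \<le>o cardSuc |S i|" using cardSuc_greater[OF card_of_Card_order] ordLess_imp_ordLeq by blast
    then have SiSuc: "|S i| \<le>o |S (Suc i)|" using iso ordIso_symmetric ordLeq_ordIso_trans by blast
    have infS: "infinite (S (Suc i))" using card_of_ordLeq_infinite[OF SiSuc IHi(2)] .
    have NS: "|N| \<le>o |S (Suc i)|" using IHi(3) SiSuc by (rule ordLeq_transitive)
    have "\<exists>R mx. good Y' ((Suc i+1)*k) R mx" if Y': "|Y'| \<le>o |S (Suc i)|" for Y' :: "'a set"
    proof -
      have YS: "|Y'| \<le>o cardSuc |S i|" using Y' iso by (rule ordLeq_ordIso_trans)
      have "stp AA N K k Y' (S i) ((i+1)*k)"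
        by (intro stp.intro stp_axioms.intro cfl_axioms IHi YS) simp
      then have "\<exists>R mx. good Y' ((i+1)*k + k) R mx" by (rule stp.step_main)
      moreover have "(i+1)*k + k = (Suc i+1)*k" by simp
      ultimately show ?thesis by metis
    qed
    then show "(\<forall>Y'::'a set. |Y'| \<le>o |S (Suc i)| \<longrightarrow> (\<exists>R mx. good Y' ((Suc i+1)*k) R mx))
      \<and> infinite (S (Suc i)) \<and> |N| \<le>o |S (Suc i)|" using infS NS by blast
  qed
qed

lemma colour:
  assumes g: "good X t R mx" and AX: "\<forall>A\<in>AA. A \<subseteq> X \<and> t < card A"
  shows "chi_CF_le AA K"
proof -
  have wfR: "wf R" using g unfolding good_def by blast
  have Vs: "|Vset X t mx x| <o |K|" for x using g unfolding good_def by blast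
  have mxp: "\<And>A. A \<in> AA \<Longrightarrow> t < card (A \<inter> X) \<Longrightarrow> mx A \<in> A \<inter> X \<and> (\<forall>y\<in>A \<inter> X. y \<noteq> mx A \<longrightarrow> (y, mx A) \<in> R)"
    using g unfolding good_def by blast
  define H where "H g x = (SOME c. c \<in> K \<and> c \<notin> g ` (Vset X t mx x - {x}))" for g :: "'a \<Rightarrow> 'b" and x
  define f where "f = wfrec R H"
  have f_prop: "f x \<in> K \<and> f x \<notin> f ` (Vset X t mx x - {x})" for x
  proof -
    have fx: "f x = H (cut f R x) x" unfolding f_def by (rule wfrec[OF wfR])
    have "cut f R x ` (Vset X t mx x - {x}) = f ` (Vset X t mx x - {x})"
    proof (rule image_cong[OF refl])
      fix y assume "y \<in> Vset X t mx x - {x}"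
      then obtain A where A: "A \<in> AA" "t < card (A \<inter> X)" "mx A = x" "y \<in> A \<inter> X" "y \<noteq> x"
        unfolding Vset_def by blast
      then have "(y, x) \<in> R" using mxp[OF A(1,2)] by blast
      then show "cut f R x y = f y" by (rule cut_apply)
    qed
    then have fx2: "f x = (SOME c. c \<in> K \<and> c \<notin> f ` (Vset X t mx x - {x}))" using fx unfolding H_def by simp
    have "\<exists>c. c \<in> K \<and> c \<notin> f ` (Vset X t mx x - {x})"
    proof (rule ccontr)
      assume "\<not> ?thesis"
      then have "K \<subseteq> f ` (Vset X t mx x - {x})" by blast
      then have "|K| \<le>o |f ` (Vset X t mx x - {x})|" by (rule card_of_mono1)
      moreover have "|f ` (Vset X t mx x - {x})| \<le>o |Vset X t mx x|"
        using card_of_image card_of_mono1[of "Vset X t mx x - {x}" "Vset X t mx x"] ordLeq_transitive by blast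
      ultimately have "|K| <o |K|" using Vs ordLeq_transitive ordLeq_ordLess_trans by blast
      then show False using ordLess_irreflexive by blast
    qed
    then show ?thesis unfolding fx2 by (rule someI_ex)
  qed
  have "cf_coloring AA K f" unfolding cf_coloring_def
  proof (intro conjI ballI)
    fix x show "f x \<in> K" using f_prop by blast
  next
    fix A assume A: "A \<in> AA"
    then have AXA1: "A \<inter> X = A" using AX by blast
    have AXA: "A \<inter> X = A" "t < card (A \<inter> X)" using AXA1 AX A by auto
    let ?x = "mx A"
    have x: "?x \<in> A" using mxp[OF A AXA(2)] by blast
    have sub: "A \<subseteq> Vset X t mx ?x" unfolding Vset_def using A AXA by blast
    have "{y\<in>A. f y = f ?x} = {?x}"
    proof
      show "{?x} \<subseteq> {y\<in>A. f y = f ?x}" using x by blast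
      show "{y\<in>A. f y = f ?x} \<subseteq> {?x}"
      proof
        fix y assume y: "y \<in> {y\<in>A. f y = f ?x}"
        show "y \<in> {?x}"
        proof (rule ccontr)
          assume "y \<notin> {?x}"
          then have "y \<in> Vset X t mx ?x - {?x}" using sub y by blast
          then have "f y \<in> f ` (Vset X t mx ?x - {?x})" by blast
          then show False using f_prop[of ?x] y by simp
        qed
      qed
    qed
    then show "\<exists>z\<in>K. card {x \<in> A. f x = z} = 1" using f_prop[of ?x] by (intro bexI[of _ "f ?x"]) auto
  qed
  moreover have "|K| \<le>o |K|" by (rule card_of_mono1) simp
  ultimately show ?thesis unfolding chi_CF_le_def by blast
qed

end

theorem theorem2p1:
  fixes K :: "'b set" and N :: "'c set" and X :: "'a set" and \<A> :: "'a set set"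
    and n k :: nat
  assumes "infinite N"
    and "(card_of N, card_of K) \<in> ordLeq"
    and "regularCard (card_of N)"
    and "n \<ge> 1" and "k \<ge> 1"
    and "succ_pow K (n - 1) X"
    and "\<forall>A\<in>\<A>. A \<subseteq> X \<and> finite A \<and> card A > n * k"
    and "almost_disjoint (k + 1) N \<A>"
  shows "chi_CF_le \<A> K"
proof -
  interpret cfl \<A> N K k
    using assms by (unfold_locales) auto
  obtain S :: "nat \<Rightarrow> 'a set" where S: "|S 0| =o |K|" "\<forall>i<n-1. |S (Suc i)| =o cardSuc |S i|" "S (n-1) = X"
    using assms(6) unfolding succ_pow_def by blast
  have "\<forall>Y'::'a set. |Y'| \<le>o |S (n-1)| \<longrightarrow> (\<exists>R mx. good Y' ((n-1+1)*k) R mx)"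
    using allQ[OF S(1,2), of "n-1"] by blast
  moreover have "|X| \<le>o |S (n-1)|" unfolding S(3) by (rule card_of_mono1) simp
  ultimately obtain R mx where "good X ((n-1+1)*k) R mx" by blast
  moreover have "(n-1+1)*k = n*k" using assms(4) by simp
  ultimately have g: "good X (n*k) R mx" by simp
  show ?thesis by (rule colour[OF g]) (use assms(7) in blast)
qed

end
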